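(* For positive integers $D_1,D_2$, integers $a,b$ with $(a,D_1)=(b,D_2)=1$, and integers $u,t$, \[ \widehat S(a,u,t,b;D_1,D_2)=\widehat S(b,t,u,a;D_2,D_1). \]
   Context: Notation: $e(x)=e^{2\pi ix}$. For integers $m_1,m_2,n_1,n_2$ and positive integers $D_1,D_2$, the $GL_3$ Kloosterman sum is \[ S(m_1,m_2,n_1,n_2;D_1,D_2)=\sum e\Big(\frac{m_1B_1+n_1(Y_1D_2-Z_1B_2)}{D_1}\Big)e\Big(\frac{m_2B_2+n_2(Y_2D_1-Z_2B_1)}{D_2}\Big), \] the sum over $B_1,C_1 \bmod D_1$, $B_2,C_2\bmod D_2$ with $\gcd(B_1,C_1,D_1)=\gcd(B_2,C_2,D_2)=1$ and $D_1C_2+B_1B_2+C_1D_2\equiv 0\pmod{D_1D_2}$, where $Y_1B_1+Z_1C_1\equiv 1\pmod{D_1}$, $Y_2B_2+Z_2C_2\equiv1\pmod{D_2}$ (independent of choices). For $(a,D_1)=(b,D_2)=1$, \[ \widehat S(a,u,t,b;D_1,D_2)=\frac{1}{D_1D_2}\sum_{x\bmod D_1}\sum_{y\bmod D_2}S(a,y,x,b;D_1,D_2)\,e\Big(\frac{-xt}{D_1}\Big)e\Big(\frac{-yu}{D_2}\Big). \] *)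

theory Defs
  imports "HOL-Analysis.Analysis" "HOL-Number_Theory.Cong"
begin

definition ee :: "real \<Rightarrow> complex" where
  "ee x = exp (2 * of_real pi * \<i> * of_real x)"

definition bez :: "int \<Rightarrow> int \<Rightarrow> int \<Rightarrow> int \<times> int" where
  "bez B C D = (SOME (y, z). [y * B + z * C = 1] (mod D))"

definition kl_index :: "int \<Rightarrow> int \<Rightarrow> (int \<times> int \<times> int \<times> int) set" where
  "kl_index D1 D2 = {(B1, C1, B2, C2). B1 \<in> {0..<D1} \<and> C1 \<in> {0..<D1} \<and>
      B2 \<in> {0..<D2} \<and> C2 \<in> {0..<D2} \<and>
      gcd (gcd B1 C1) D1 = 1 \<and> gcd (gcd B2 C2) D2 = 1 \<and>
      [D1 * C2 + B1 * B2 + C1 * D2 = 0] (mod (D1 * D2))}"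

definition kl_sum :: "int \<Rightarrow> int \<Rightarrow> int \<Rightarrow> int \<Rightarrow> int \<Rightarrow> int \<Rightarrow> complex" where
  "kl_sum m1 m2 n1 n2 D1 D2 =
    (\<Sum>(B1, C1, B2, C2) \<in> kl_index D1 D2.
       (case bez B1 C1 D1 of (Y1, Z1) \<Rightarrow>
        case bez B2 C2 D2 of (Y2, Z2) \<Rightarrow>
          ee (of_int (m1 * B1 + n1 * (Y1 * D2 - Z1 * B2)) / of_int D1) *
          ee (of_int (m2 * B2 + n2 * (Y2 * D1 - Z2 * B1)) / of_int D2)))"

definition kl_hat :: "int \<Rightarrow> int \<Rightarrow> int \<Rightarrow> int \<Rightarrow> int \<Rightarrow> int \<Rightarrow> complex" where
  "kl_hat a u t b D1 D2 =
    (1 / of_int (D1 * D2)) *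
    (\<Sum>x \<in> {0..<D1}. \<Sum>y \<in> {0..<D2}.
       kl_sum a y x b D1 D2 * ee (of_int (- x * t) / of_int D1) *
       ee (of_int (- y * u) / of_int D2))"

end

theory Submission
  imports Defs
begin


lemma ee_add: "ee (x + y) = ee x * ee y"
  unfolding ee_def by (simp add: distrib_left exp_add)

lemma ee_int: "ee (of_int n) = 1"
proof -
  have "ee (of_int n) = exp (2 * of_real (of_int n) * pi * \<i>)"
    unfolding ee_def by (simp add: algebra_simps)
  also have "\<dots> = 1" by (rule exp_integer_2pi) simp
  finally show ?thesis .
qed

lemma ee_eq_1_iff: "ee x = 1 \<longleftrightarrow> x \<in> \<int>"
proof
  assume "ee x = 1"
  then obtain n :: int where "2 * pi * x = of_int (2*n) * pi"
    unfolding ee_def exp_eq_1 by (auto simp: algebra_simps)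
  then have "x = of_int n" by simp
  then show "x \<in> \<int>" by simp
next
  assume "x \<in> \<int>" then show "ee x = 1" by (auto elim!: Ints_cases simp: ee_int)
qed

lemma ee_mod:
  fixes k D :: int assumes "D \<noteq> 0" "[k = k'] (mod D)"
  shows "ee (of_int k / of_int D) = ee (of_int k' / of_int D)"
proof -
  obtain m where m: "k = k' + D * m" using assms(2)
    by (metis cong_iff_lin cong_sym)
  have "of_int k / of_int D = of_int k' / of_int D + (of_int m :: real)"
    using assms(1) by (simp add: m field_simps)
  then show ?thesis by (simp add: ee_add ee_int)
qed

lemma ee_pow: "ee (of_int (int n * k) / of_int D) = ee (of_int k / of_int D) ^ n"
proof (induction n)
  case 0 then show ?case by (simp add: ee_def)
next
  case (Suc n)
  have "of_int (int (Suc n) * k) / of_int D = of_int (int n * k) / of_int D + (of_int k / of_int D :: real)"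
    by (simp add: add_divide_distrib algebra_simps)
  then show ?case using Suc by (simp add: ee_add)
qed

lemma ee_orth:
  fixes D k :: int assumes "D > 0"
  shows "(\<Sum>x\<in>{0..<D}. ee (of_int (x * k) / of_int D)) = (if D dvd k then of_int D else 0)"
proof -
  define z where "z = ee (of_int k / of_int D)"
  have "(\<Sum>x\<in>{0..<D}. ee (of_int (x * k) / of_int D)) = (\<Sum>n\<in>{..<nat D}. ee (of_int (int n * k) / of_int D))"
  proof (rule sum.reindex_bij_witness[where i = int and j = nat])
  qed auto
  also have "\<dots> = (\<Sum>n<nat D. z ^ n)" by (intro sum.cong refl) (simp only: z_def ee_pow)
  finally have S: "(\<Sum>x\<in>{0..<D}. ee (of_int (x * k) / of_int D)) = (\<Sum>n<nat D. z ^ n)" .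
  show ?thesis
  proof (cases "D dvd k")
    case True
    then obtain m where "k = D * m" by blast
    then have "z = 1" using assms by (simp add: z_def ee_int)
    then show ?thesis using S True assms by simp
  next
    case False
    have "z \<noteq> 1"
    proof
      assume "z = 1"
      then have "of_int k / of_int D \<in> (\<int> :: real set)" by (simp add: z_def ee_eq_1_iff)
      then obtain m where "of_int k / of_int D = (of_int m :: real)" by (auto elim: Ints_cases)
      then have "k = D * m" using assms by (simp add: field_simps) (metis of_int_eq_iff of_int_mult)
      then show False using False by simp
    qed
    moreover have "z ^ nat D = 1"
    proof -
      have "z ^ nat D = ee (of_int (int (nat D) * k) / of_int D)" by (simp only: ee_pow z_def)
      also have "of_int (int (nat D) * k) / of_int D = (of_int k :: real)" using assms by simp
      also have "ee (of_int k) = 1" by (simp add: ee_int)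
      finally show ?thesis .
    qed
    ultimately show ?thesis using S False by (simp add: geometric_sum)
  qed
qed




lemma cong_ex: "[a = b] (mod m) \<longleftrightarrow> (\<exists>k. a - b = m * (k::int))"
  by (simp add: cong_iff_dvd_diff dvd_def)

lemma bez_exists:
  fixes B C D :: int assumes "gcd (gcd B C) D = 1"
  shows "\<exists>y z. [y * B + z * C = 1] (mod D)"
proof -
  obtain u v where uv: "u * B + v * C = gcd B C" using bezout_int by blast
  obtain al be where ab: "al * gcd B C + be * D = 1" using bezout_int[of "gcd B C" D] assms by auto
  have "(al*u) * B + (al * v) * C - 1 = al * (u*B + v * C) + be*D - 1 - be*D" by (simp add: algebra_simps)
  also have "\<dots> = D * (-be)" using uv ab by simp
  finally have "(al*u) * B + (al * v) * C - 1 = D * (-be)" .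
  then show ?thesis unfolding cong_ex by blast
qed

lemma bez_prop:
  fixes B C D :: int assumes "gcd (gcd B C) D = 1"
  shows "[fst (bez B C D) * B + snd (bez B C D) * C = 1] (mod D)"
proof -
  have "\<exists>p. (\<lambda>(y, z). [y * B + z * C = 1] (mod D)) p"
    using bez_exists[OF assms] by auto
  then have "(\<lambda>(y, z). [y * B + z * C = 1] (mod D)) (bez B C D)"
    unfolding bez_def by (rule someI_ex)
  then show ?thesis by (simp add: case_prod_beta)
qed

lemma charT:
  fixes D1 D2 B1 C1 B2 Y Z s :: int
  assumes "[Y*B1 + Z*C1 = 1] (mod D1)" "D1 dvd (B1*B2 + C1*D2)"
  shows "[Y*D2 - Z*B2 = s] (mod D1) \<longleftrightarrow> [s*B1 = D2] (mod D1) \<and> [s*C1 = -B2] (mod D1)"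
proof -
  obtain k1 where k1: "Y*B1 + Z*C1 - 1 = D1*k1" using assms(1) unfolding cong_ex by blast
  obtain k2 where k2: "B1*B2 + C1*D2 = D1*k2" using assms(2) by (auto simp: dvd_def)
  show ?thesis
  proof
    assume "[Y*D2 - Z*B2 = s] (mod D1)"
    then obtain k3 where k3: "Y*D2 - Z*B2 - s = D1*k3" unfolding cong_ex by blast
    have "s*B1 - D2 = D1*(-B1*k3 + D2*k1 - Z*k2)" using k1 k2 k3 by algebra
    moreover have "s*C1 - (-B2) = D1*(-C1*k3 + Y*k2 - B2*k1)" using k1 k2 k3 by algebra
    ultimately show "[s*B1 = D2] (mod D1) \<and> [s*C1 = -B2] (mod D1)" unfolding cong_ex by blast
  next
    assume "[s*B1 = D2] (mod D1) \<and> [s*C1 = -B2] (mod D1)"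
    then obtain k4 k5 where k4: "s*B1 - D2 = D1*k4" and k5: "s*C1 - (-B2) = D1*k5"
      unfolding cong_ex by blast
    have "Y*D2 - Z*B2 - s = D1*(-Y*k4 - Z*k5 + s*k1)" using k1 k4 k5 by algebra
    then show "[Y*D2 - Z*B2 = s] (mod D1)" unfolding cong_ex by blast
  qed
qed




lemma core_FS:
  fixes D1 D2 p C1 r C2 s q Y Z :: int
  assumes D1: "D1 > 0" and D2: "D2 > 0" and YZ: "[Y*p + Z*C1 = 1] (mod D1)"
    and h1: "[s*p = D2] (mod D1)" and h2: "[s*C1 = -r] (mod D1)"
    and h3: "[q*r = D1] (mod D2)" and h4: "[q*C2 = -p] (mod D2)"
    and h5: "[D1*C2 + p*r + C1*D2 = 0] (mod D1*D2)"
  shows "\<exists>a. [p*a = -q] (mod D1) \<and> [D2*C1*a = r*q - D1] (mod D1*D2)"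
proof -
  obtain w where w: "q*r - D1 = D2*w" using h3 unfolding cong_ex by blast
  obtain k where k: "D1*C2 + p*r + C1*D2 - 0 = D1*D2*k" using h5 unfolding cong_ex by (auto simp: mult.assoc)
  obtain j where j: "q*C2 - (-p) = D2*j" using h4 unfolding cong_ex by blast
  obtain k1 where k1: "Y*p + Z*C1 - 1 = D1*k1" using YZ unfolding cong_ex by blast
  have "D2*(p*w + C1*q) = D2*(D1*(q*k - j))" using w k j by algebra
  then have c: "p*w + C1*q = D1*(q*k - j)" using D2 by simp
  have "p*(-Y*q + Z*w) - (-q) = D1*(-q*k1 + Z*(q*k - j))" using c k1 by algebra
  moreover have "D2*C1*(-Y*q + Z*w) - (r*q - D1) = (D1*D2)*(-Y*(q*k-j) + w*k1)" using c k1 w by algebra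
  ultimately show ?thesis unfolding cong_ex by blast
qed

lemma core_SF:
  fixes D1 D2 p C1 r s q a :: int
  assumes D1: "D1 > 0" and D2: "D2 > 0"
    and h1: "[s*p = D2] (mod D1)" and h3: "[q*r = D1] (mod D2)"
    and h2: "[s*C1 = -r] (mod D1)" and e1: "[p*a = -q] (mod D1)"
    and e2: "[D2*C1*a = r*q - D1] (mod D1*D2)"
  shows "D1 dvd (p*r + C1*D2)" and "gcd (gcd p C1) D1 = 1"
    and "gcd (gcd r ((-(p*r+C1*D2)) div D1)) D2 = 1"
    and "[q*((-(p*r+C1*D2)) div D1) = -p] (mod D2)"
    and "D1*((-(p*r+C1*D2)) div D1) + p*r + C1*D2 = 0"
proof -
  obtain x where x: "s*p - D2 = D1*x" using h1 unfolding cong_ex by blast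
  obtain y where y: "s*C1 - (-r) = D1*y" using h2 unfolding cong_ex by blast
  obtain a2 where a2: "p*a - (-q) = D1*a2" using e1 unfolding cong_ex by blast
  obtain a3 where a3: "D2*C1*a - (r*q - D1) = (D1*D2)*a3" using e2 unfolding cong_ex by blast
  obtain w where w: "q*r - D1 = D2*w" using h3 unfolding cong_ex by blast
  have pr: "p*r + C1*D2 = D1*(y*p - x*C1)" using x y by algebra
  then show "D1 dvd (p*r + C1*D2)" by simp
  have "-(p*r+C1*D2) = D1*(x*C1 - y*p)" using pr by algebra
  then have C2: "(-(p*r+C1*D2)) div D1 = x*C1 - y*p" using D1 by simp
  show "D1*((-(p*r+C1*D2)) div D1) + p*r + C1*D2 = 0" unfolding C2 using pr by algebra
  have "D1 * (D1*(a2*y - a3*x) - p*(a*y - a3 * s) + C1*(a*x - a2 * s)) = D1 * 1"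
    using x y a2 a3 by algebra
  then have det: "D1*(a2*y - a3*x) - p*(a*y - a3 * s) + C1*(a*x - a2 * s) = 1" using D1 by simp
  have "gcd (gcd p C1) D1 dvd D1*(a2*y - a3*x) - p*(a*y - a3 * s) + C1*(a*x - a2 * s)"
    by (intro dvd_add dvd_diff dvd_mult2) (auto intro: dvd_trans[OF gcd_dvd1 gcd_dvd1] dvd_trans[OF gcd_dvd1 gcd_dvd2])
  then show "gcd (gcd p C1) D1 = 1" using det by simp
  have "D1 * (a*(x*C1 - y*p) + a2*r + a3*D2) = D1 * 1" using x y a2 a3 by algebra
  then have det2: "a*(x*C1 - y*p) + a2*r + a3*D2 = 1" using D1 by simp
  have "gcd (gcd r (x*C1 - y*p)) D2 dvd a*(x*C1 - y*p) + a2*r + a3*D2"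
    by (intro dvd_add dvd_mult) (auto intro: dvd_trans[OF gcd_dvd1 gcd_dvd1] dvd_trans[OF gcd_dvd1 gcd_dvd2])
  then show "gcd (gcd r ((-(p*r+C1*D2)) div D1)) D2 = 1" unfolding C2 using det2 by simp
  have "D1 * (q*(x*C1 - y*p) - (-p)) = D1 * (D2*(p*a3 - C1*a2))" using x y a2 a3 w by algebra
  then have "q*(x*C1 - y*p) - (-p) = D2*(p*a3 - C1*a2)" using D1 by simp
  then show "[q*((-(p*r+C1*D2)) div D1) = -p] (mod D2)" unfolding C2 cong_ex by blast
qed

lemma uniq_a:
  fixes D1 D2 p C1 a a' q X Y Z :: int
  assumes D2: "D2 > 0" and YZ: "[Y*p + Z*C1 = 1] (mod D1)"
    and "[p*a = -q] (mod D1)" "[p*a' = -q] (mod D1)"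
    and "[D2*C1*a = X] (mod D1*D2)" "[D2*C1*a' = X] (mod D1*D2)"
  shows "[a = a'] (mod D1)"
proof -
  have "[p*a = p*a'] (mod D1)" using assms(3,4) by (metis cong_sym cong_trans)
  then obtain k where k: "p*a - p*a' = D1*k" unfolding cong_ex by blast
  have "[D2*C1*a = D2*C1*a'] (mod D1*D2)" using assms(5,6) by (metis cong_sym cong_trans)
  then obtain m where "D2*C1*a - D2*C1*a' = (D1*D2)*m" unfolding cong_ex by blast
  then have "D2*(C1*a - C1*a') = D2*(D1*m)" by (simp add: algebra_simps)
  then have m: "C1*a - C1*a' = D1*m" using D2 by simp
  obtain k1 where k1: "Y*p + Z*C1 - 1 = D1*k1" using YZ unfolding cong_ex by blast
  have "a - a' = D1*(Y*k + Z*m - k1*(a-a'))" using k m k1 by algebra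
  then show ?thesis unfolding cong_ex by blast
qed

lemma uniq_C2:
  fixes D1 D2 p r C1 C2 :: int
  assumes D1: "D1 > 0" and D2: "D2 > 0" and "C2 \<in> {0..<D2}"
    and "[D1*C2 + p*r + C1*D2 = 0] (mod D1*D2)"
  shows "C2 = ((-(p*r + C1*D2)) div D1) mod D2"
proof -
  obtain k where k: "D1*C2 + p*r + C1*D2 - 0 = (D1*D2)*k" using assms(4) unfolding cong_ex by blast
  have "-(p*r + C1*D2) = D1*(C2 - D2*k)" using k by algebra
  then have e: "(-(p*r + C1*D2)) div D1 = C2 + D2*(-k)" using D1 by simp
  have "(C2 + D2*(-k)) mod D2 = C2" using assms(3) by (simp only: mod_mult_self2) simp
  then show ?thesis using e by simp
qed




definition Tv :: "int \<Rightarrow> int \<Rightarrow> int \<times> int \<times> int \<times> int \<Rightarrow> int" where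
  "Tv D1 D2 \<tau> = (case \<tau> of (B1, C1, B2, C2) \<Rightarrow>
     (fst (bez B1 C1 D1) * D2 - snd (bez B1 C1 D1) * B2) mod D1)"

definition Qv :: "int \<Rightarrow> int \<Rightarrow> int \<times> int \<times> int \<times> int \<Rightarrow> int" where
  "Qv D1 D2 \<tau> = (case \<tau> of (B1, C1, B2, C2) \<Rightarrow>
     (fst (bez B2 C2 D2) * D1 - snd (bez B2 C2 D2) * B1) mod D2)"

definition pa :: "int \<Rightarrow> int \<Rightarrow> int \<times> int \<times> int \<times> int \<Rightarrow> int" where
  "pa D1 D2 \<tau> = (case \<tau> of (p, C1, r, C2) \<Rightarrow>
     SOME a. a \<in> {0..<D1} \<and> [p*a = - Qv D1 D2 \<tau>] (mod D1) \<and> [D2*C1*a = r * Qv D1 D2 \<tau> - D1] (mod D1*D2))"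

definition phi :: "int \<Rightarrow> int \<Rightarrow> int \<times> int \<times> int \<times> int \<Rightarrow> int \<times> int \<times> int \<times> int" where
  "phi D1 D2 \<tau> = (Tv D1 D2 \<tau>, pa D1 D2 \<tau>, Qv D1 D2 \<tau>,
     ((-(Tv D1 D2 \<tau> * Qv D1 D2 \<tau> + pa D1 D2 \<tau> * D2)) div D1) mod D2)"

lemma pa_simp: "pa D1 D2 (p, C1, r, C2) = (SOME a. a \<in> {0..<D1} \<and> [p*a = - Qv D1 D2 (p, C1, r, C2)] (mod D1) \<and> [D2*C1*a = r * Qv D1 D2 (p, C1, r, C2) - D1] (mod D1*D2))"
  by (simp add: pa_def)

lemma gcd_mod3: "gcd (gcd q (x mod m)) m = gcd (gcd q x) (m::int)"
proof -
  have "gcd (x mod m) m = gcd x m" by (metis gcd_red_int gcd.commute)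
  then show ?thesis by (metis gcd.assoc)
qed

lemma cong_eq_range: "[x = y] (mod m) \<Longrightarrow> x \<in> {0..<m} \<Longrightarrow> y \<in> {0..<m} \<Longrightarrow> x = (y::int)"
  using cong_less_imp_eq_int by auto

lemma phi_props:
  fixes D1 D2 p C1 r C2 :: int
  assumes D1: "D1 > 0" and D2: "D2 > 0" and mem: "(p, C1, r, C2) \<in> kl_index D1 D2"
  shows "phi D1 D2 (p, C1, r, C2) \<in> kl_index D1 D2"
    and "Tv D1 D2 (phi D1 D2 (p, C1, r, C2)) = p"
    and "Qv D1 D2 (phi D1 D2 (p, C1, r, C2)) = r"
    and "phi D1 D2 (phi D1 D2 (p, C1, r, C2)) = (p, C1, r, C2)"
proof -
  define \<tau> where "\<tau> = (p, C1, r, C2)"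
  have rp: "p \<in> {0..<D1}" "C1 \<in> {0..<D1}" "r \<in> {0..<D2}" "C2 \<in> {0..<D2}"
    and g1: "gcd (gcd p C1) D1 = 1" and g2: "gcd (gcd r C2) D2 = 1"
    and h5: "[D1 * C2 + p * r + C1 * D2 = 0] (mod (D1 * D2))"
    using mem by (auto simp: kl_index_def)
  obtain k where k: "D1 * C2 + p * r + C1 * D2 - 0 = (D1 * D2) * k" using h5 unfolding cong_ex by blast
  have dv1: "D1 dvd (p*r + C1*D2)"
  proof -
    have "p*r + C1*D2 = D1 * (D2*k - C2)" using k by algebra
    then show ?thesis by simp
  qed
  have dv2: "D2 dvd (r*p + C2*D1)"
  proof -
    have "r*p + C2*D1 = D2 * (D1*k - C1)" using k by algebra
    then show ?thesis by simp
  qed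
  define s where "s = Tv D1 D2 \<tau>"
  define q where "q = Qv D1 D2 \<tau>"
  define Y1 Z1 where "Y1 = fst (bez p C1 D1)" and "Z1 = snd (bez p C1 D1)"
  define Y2 Z2 where "Y2 = fst (bez r C2 D2)" and "Z2 = snd (bez r C2 D2)"
  have YZ1: "[Y1*p + Z1*C1 = 1] (mod D1)" using bez_prop[OF g1] by (simp add: Y1_def Z1_def)
  have YZ2: "[Y2*r + Z2*C2 = 1] (mod D2)" using bez_prop[OF g2] by (simp add: Y2_def Z2_def)
  have sdef: "s = (Y1*D2 - Z1*r) mod D1" by (simp add: s_def Tv_def \<tau>_def Y1_def Z1_def)
  have qdef: "q = (Y2*D1 - Z2*p) mod D2" by (simp add: q_def Qv_def \<tau>_def Y2_def Z2_def)
  have s_rng: "s \<in> {0..<D1}" using D1 sdef by simp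
  have q_rng: "q \<in> {0..<D2}" using D2 qdef by simp
  have "[Y1*D2 - Z1*r = s] (mod D1)" by (simp add: sdef cong_sym)
  then have h1: "[s*p = D2] (mod D1)" and h2: "[s*C1 = -r] (mod D1)"
    using charT[OF YZ1 dv1] by auto
  have "[Y2*D1 - Z2*p = q] (mod D2)" by (simp add: qdef cong_sym)
  then have h3: "[q*r = D1] (mod D2)" and h4: "[q*C2 = -p] (mod D2)"
    using charT[OF YZ2 dv2] by auto
  obtain a0 where a0: "[p*a0 = -q] (mod D1)" "[D2*C1*a0 = r*q - D1] (mod D1*D2)"
    using core_FS[OF D1 D2 YZ1 h1 h2 h3 h4 h5] by blast
  define a1 where "a1 = a0 mod D1"
  have "\<exists>a. a \<in> {0..<D1} \<and> [p*a = -q] (mod D1) \<and> [D2*C1*a = r*q - D1] (mod D1*D2)"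
  proof (intro exI conjI)
    show "a1 \<in> {0..<D1}" using D1 by (simp add: a1_def)
    have "[p*a1 = p*a0] (mod D1)" by (simp add: a1_def cong_mult)
    then show "[p*a1 = -q] (mod D1)" using a0(1) by (rule cong_trans)
    have am: "a1 = a0 - (a0 div D1) * D1" unfolding a1_def by (rule minus_div_mult_eq_mod[symmetric])
    have "D2*C1*a1 - D2*C1*a0 = (D1*D2)*(-(C1*(a0 div D1)))"
      unfolding am by algebra
    then have "[D2*C1*a1 = D2*C1*a0] (mod D1*D2)" unfolding cong_ex by blast
    then show "[D2*C1*a1 = r*q - D1] (mod D1*D2)" using a0(2) by (rule cong_trans)
  qed
  then have "pa D1 D2 \<tau> \<in> {0..<D1} \<and> [p * pa D1 D2 \<tau> = -q] (mod D1) \<and> [D2*C1*pa D1 D2 \<tau> = r*q - D1] (mod D1*D2)"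
    unfolding \<tau>_def q_def pa_simp by (rule someI_ex)
  then have a_rng: "pa D1 D2 \<tau> \<in> {0..<D1}" and e1: "[p * pa D1 D2 \<tau> = -q] (mod D1)"
    and e2: "[D2*C1*pa D1 D2 \<tau> = r*q - D1] (mod D1*D2)" by auto
  define a where "a = pa D1 D2 \<tau>"
  note a_rng = a_rng[folded a_def] and e1 = e1[folded a_def] and e2 = e2[folded a_def]
  have h1': "[p * s = D2] (mod D1)" using h1 by (simp add: mult.commute)
  have h3': "[r*q = D1] (mod D2)" using h3 by (simp add: mult.commute)
  have e2': "[D2*a*C1 = q*r - D1] (mod D1*D2)" using e2 by (simp add: ac_simps)
  define C2e where "C2e = (-(s*q + a*D2)) div D1"
  note SF = core_SF[OF D1 D2 h1' h3' e1 h2 e2', folded C2e_def]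
  define C2' where "C2' = C2e mod D2"
  have phi_eq: "phi D1 D2 \<tau> = (s, a, q, C2')"
    by (simp add: phi_def s_def q_def a_def C2'_def C2e_def)
  have gA: "gcd (gcd s a) D1 = 1" using SF(2) .
  have gB: "gcd (gcd q C2') D2 = 1" using SF(3) by (simp add: C2'_def gcd_mod3)
  have C2'_rng: "C2' \<in> {0..<D2}" using D2 by (simp add: C2'_def)
  have C2'c: "[C2' = C2e] (mod D2)" by (simp add: C2'_def)
  have ex: "D1*C2e + s*q + a*D2 = 0" using SF(5) .
  have cong': "[D1 * C2' + s * q + a * D2 = 0] (mod (D1 * D2))"
  proof -
    have "D1 * C2' + s * q + a * D2 - 0 = (D1*D2) * (-(C2e div D2))"
      using ex unfolding C2'_def minus_div_mult_eq_mod[symmetric] by algebra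
    then show ?thesis unfolding cong_ex by blast
  qed
  show mem': "phi D1 D2 (p, C1, r, C2) \<in> kl_index D1 D2"
    using s_rng a_rng q_rng C2'_rng gA gB cong' unfolding phi_eq[unfolded \<tau>_def] kl_index_def by auto
  define Y3 Z3 where "Y3 = fst (bez s a D1)" and "Z3 = snd (bez s a D1)"
  have YZ3: "[Y3 * s + Z3*a = 1] (mod D1)" using bez_prop[OF gA] by (simp add: Y3_def Z3_def)
  have dv3: "D1 dvd (s*q + a*D2)" using SF(1) .
  have "[Y3*D2 - Z3*q = p] (mod D1)"
    using charT[OF YZ3 dv3, of p] h1' e1 by simp
  then have T2: "Tv D1 D2 (phi D1 D2 \<tau>) = p"
    using rp(1) D1 by (simp add: phi_eq Tv_def Y3_def Z3_def cong_def)
  show "Tv D1 D2 (phi D1 D2 (p, C1, r, C2)) = p" using T2 by (simp add: \<tau>_def)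
  define Y4 Z4 where "Y4 = fst (bez q C2' D2)" and "Z4 = snd (bez q C2' D2)"
  have YZ4: "[Y4*q + Z4*C2' = 1] (mod D2)" using bez_prop[OF gB] by (simp add: Y4_def Z4_def)
  have dv4: "D2 dvd (q * s + C2'*D1)"
  proof -
    have "q * s + C2'*D1 = D2 * (-a - D1*(C2e div D2))"
      using ex unfolding C2'_def minus_div_mult_eq_mod[symmetric] by algebra
    then show ?thesis by simp
  qed
  have "[r*C2' = -s] (mod D2)"
    using SF(4) C2'c by (metis cong_mult cong_refl cong_trans)
  then have "[Y4*D1 - Z4 * s = r] (mod D2)"
    using charT[OF YZ4 dv4, of r] h3' by simp
  then have Q2: "Qv D1 D2 (phi D1 D2 \<tau>) = r"
    using rp(3) D2 by (simp add: phi_eq Qv_def Y4_def Z4_def cong_def)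
  show "Qv D1 D2 (phi D1 D2 (p, C1, r, C2)) = r" using Q2 by (simp add: \<tau>_def)
  have "\<exists>a'. a' \<in> {0..<D1} \<and> [s*a' = - r] (mod D1) \<and> [D2*a*a' = q * r - D1] (mod D1*D2)"
    using rp(2) h2 e2' by blast
  then have P: "pa D1 D2 (phi D1 D2 \<tau>) \<in> {0..<D1} \<and> [s * pa D1 D2 (phi D1 D2 \<tau>) = - r] (mod D1)
      \<and> [D2*a*pa D1 D2 (phi D1 D2 \<tau>) = q * r - D1] (mod D1*D2)"
    unfolding phi_eq pa_simp Q2[unfolded phi_eq] by (rule someI_ex)
  have "[pa D1 D2 (phi D1 D2 \<tau>) = C1] (mod D1)"
    by (rule uniq_a[where a="pa D1 D2 (phi D1 D2 \<tau>)" and a'=C1 and q=r and X="q*r - D1", OF D2 YZ3]) (use P h2 e2' in auto)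
  then have pa2: "pa D1 D2 (phi D1 D2 \<tau>) = C1" using P rp(2) cong_eq_range by blast
  have C22: "C2 = ((-(p*r + C1*D2)) div D1) mod D2" using uniq_C2[OF D1 D2 rp(4) h5] .
  have "phi D1 D2 (phi D1 D2 \<tau>) = (p, C1, r, C2)"
    using T2 Q2 pa2 C22 unfolding phi_def[of D1 D2 "phi D1 D2 \<tau>"] by simp
  then show "phi D1 D2 (phi D1 D2 (p, C1, r, C2)) = (p, C1, r, C2)" by (simp add: \<tau>_def)
qed




definition T0 :: "int \<Rightarrow> int \<Rightarrow> int \<times> int \<times> int \<times> int \<Rightarrow> int" where
  "T0 D1 D2 \<tau> = (case \<tau> of (B1, C1, B2, C2) \<Rightarrow> fst (bez B1 C1 D1) * D2 - snd (bez B1 C1 D1) * B2)"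

definition Q0 :: "int \<Rightarrow> int \<Rightarrow> int \<times> int \<times> int \<times> int \<Rightarrow> int" where
  "Q0 D1 D2 \<tau> = (case \<tau> of (B1, C1, B2, C2) \<Rightarrow> fst (bez B2 C2 D2) * D1 - snd (bez B2 C2 D2) * B1)"

lemma Tv_T0: "Tv D1 D2 v = T0 D1 D2 v mod D1"
  by (cases v) (simp add: Tv_def T0_def)

lemma Qv_Q0: "Qv D1 D2 v = Q0 D1 D2 v mod D2"
  by (cases v) (simp add: Qv_def Q0_def)

lemma kl_sum_alt:
  "kl_sum m1 m2 n1 n2 D1 D2 = (\<Sum>v\<in>kl_index D1 D2.
     ee (of_int (m1 * fst v + n1 * T0 D1 D2 v) / of_int D1) *
     ee (of_int (m2 * fst (snd (snd v)) + n2 * Q0 D1 D2 v) / of_int D2))"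
  unfolding kl_sum_def
  by (intro sum.cong refl) (auto simp: T0_def Q0_def split: prod.split)

lemma finite_kl_index: "finite (kl_index D1 D2)"
proof (rule finite_subset)
  show "kl_index D1 D2 \<subseteq> {0..<D1} \<times> {0..<D1} \<times> {0..<D2} \<times> {0..<D2}"
    by (auto simp: kl_index_def)
qed auto

lemma ee4: "ee A * ee B * ee C * ee D = ee (A + B + C + D)"
  by (simp add: ee_add)

lemma hat_reduce:
  fixes D1 D2 a b u t :: int
  assumes D1: "D1 > 0" and D2: "D2 > 0"
  shows "kl_hat a u t b D1 D2 = (\<Sum>v\<in>kl_index D1 D2.
     if [fst (snd (snd v)) = u] (mod D2) \<and> [Tv D1 D2 v = t] (mod D1)
     then ee (of_int (a * fst v) / of_int D1) * ee (of_int (b * Qv D1 D2 v) / of_int D2) else 0)"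
proof -
  define I where "I = kl_index D1 D2"
  define c :: complex where "c = 1 / of_int (D1 * D2)"
  define K :: "int \<times> int \<times> int \<times> int \<Rightarrow> complex" where "K v = ee (of_int (a * fst v) / of_int D1) * ee (of_int (b * Q0 D1 D2 v) / of_int D2)" for v
  define g1 :: "int \<times> int \<times> int \<times> int \<Rightarrow> int \<Rightarrow> complex" where "g1 v x = ee (of_int (x * (T0 D1 D2 v - t)) / of_int D1)" for v x
  define g2 :: "int \<times> int \<times> int \<times> int \<Rightarrow> int \<Rightarrow> complex" where "g2 v y = ee (of_int (y * (fst (snd (snd v)) - u)) / of_int D2)" for v y
  have pw: "ee (of_int (a * fst v + x * T0 D1 D2 v) / of_int D1) *
     ee (of_int (y * fst (snd (snd v)) + b * Q0 D1 D2 v) / of_int D2) *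
     ee (of_int (- x * t) / of_int D1) * ee (of_int (- y * u) / of_int D2)
     = K v * g1 v x * g2 v y" for v x y
  proof -
    have "K v * g1 v x * g2 v y = ee (of_int (a * fst v) / of_int D1) * ee (of_int (b * Q0 D1 D2 v) / of_int D2)
        * ee (of_int (x * (T0 D1 D2 v - t)) / of_int D1) * ee (of_int (y * (fst (snd (snd v)) - u)) / of_int D2)"
      by (simp add: K_def g1_def g2_def)
    also have "\<dots> = ee (of_int (a * fst v) / of_int D1 + of_int (b * Q0 D1 D2 v) / of_int D2
        + of_int (x * (T0 D1 D2 v - t)) / of_int D1 + of_int (y * (fst (snd (snd v)) - u)) / of_int D2)"
      by (rule ee4)
    also have "\<dots> = ee (of_int (a * fst v + x * T0 D1 D2 v) / of_int D1 +
       of_int (y * fst (snd (snd v)) + b * Q0 D1 D2 v) / of_int D2 +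
       of_int (- x * t) / of_int D1 + of_int (- y * u) / of_int D2)"
      by (rule arg_cong[where f=ee]) (simp add: add_divide_distrib diff_divide_distrib algebra_simps)
    also have "\<dots> = ee (of_int (a * fst v + x * T0 D1 D2 v) / of_int D1) *
     ee (of_int (y * fst (snd (snd v)) + b * Q0 D1 D2 v) / of_int D2) *
     ee (of_int (- x * t) / of_int D1) * ee (of_int (- y * u) / of_int D2)"
      by (rule ee4[symmetric])
    finally show ?thesis by simp
  qed
  have "kl_hat a u t b D1 D2 = c * (\<Sum>x\<in>{0..<D1}. \<Sum>y\<in>{0..<D2}. \<Sum>v\<in>I. K v * g1 v x * g2 v y)"
    unfolding kl_hat_def c_def I_def kl_sum_alt sum_distrib_right pw ..
  also have "\<dots> = c * (\<Sum>v\<in>I. \<Sum>x\<in>{0..<D1}. \<Sum>y\<in>{0..<D2}. K v * g1 v x * g2 v y)"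
    by (subst sum.swap) (subst (2) sum.swap, rule refl)
  also have "\<dots> = (\<Sum>v\<in>I. c * K v * (\<Sum>x\<in>{0..<D1}. g1 v x) * (\<Sum>y\<in>{0..<D2}. g2 v y))"
  proof -
    have "c * K v * (\<Sum>x\<in>{0..<D1}. g1 v x) * (\<Sum>y\<in>{0..<D2}. g2 v y) =
      (\<Sum>x\<in>{0..<D1}. \<Sum>y\<in>{0..<D2}. c * (K v * g1 v x * g2 v y))" for v
      by (unfold mult.assoc sum_product) (simp only: sum_distrib_left mult.assoc)
    then show ?thesis by (simp add: sum_distrib_left)
  qed
  also have "\<dots> = (\<Sum>v\<in>I.
     if [fst (snd (snd v)) = u] (mod D2) \<and> [Tv D1 D2 v = t] (mod D1)
     then ee (of_int (a * fst v) / of_int D1) * ee (of_int (b * Qv D1 D2 v) / of_int D2) else 0)"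
  proof (intro sum.cong refl)
    fix v
    have s1: "(\<Sum>x\<in>{0..<D1}. g1 v x) = (if [Tv D1 D2 v = t] (mod D1) then of_int D1 else 0)"
      unfolding g1_def ee_orth[OF D1] Tv_T0 by (simp add: cong_iff_dvd_diff[symmetric])
    have s2: "(\<Sum>y\<in>{0..<D2}. g2 v y) = (if [fst (snd (snd v)) = u] (mod D2) then of_int D2 else 0)"
      unfolding g2_def ee_orth[OF D2] by (simp add: cong_iff_dvd_diff)
    have KK: "K v = ee (of_int (a * fst v) / of_int D1) * ee (of_int (b * Qv D1 D2 v) / of_int D2)"
    proof -
      have "[b * Q0 D1 D2 v = b * Qv D1 D2 v] (mod D2)" unfolding Qv_Q0
        by (intro cong_mult cong_refl) simp
      then have "ee (of_int (b * Q0 D1 D2 v) / of_int D2) = ee (of_int (b * Qv D1 D2 v) / of_int D2)"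
        using ee_mod[of D2] D2 by blast
      then show ?thesis unfolding K_def by simp
    qed
    show "c * K v * (\<Sum>x\<in>{0..<D1}. g1 v x) * (\<Sum>y\<in>{0..<D2}. g2 v y) = (
     if [fst (snd (snd v)) = u] (mod D2) \<and> [Tv D1 D2 v = t] (mod D1)
     then ee (of_int (a * fst v) / of_int D1) * ee (of_int (b * Qv D1 D2 v) / of_int D2) else 0)"
      unfolding s1 s2 KK c_def using D1 D2 by simp
  qed
  finally show ?thesis by (simp add: I_def)
qed




definition sw :: "int \<times> int \<times> int \<times> int \<Rightarrow> int \<times> int \<times> int \<times> int" where
  "sw v = (case v of (B1, C1, B2, C2) \<Rightarrow> (B2, C2, B1, C1))"

lemma sw_sw: "sw (sw v) = v" by (cases v) (simp add: sw_def)

lemma sw_mem: "v \<in> kl_index D1 D2 \<Longrightarrow> sw v \<in> kl_index D2 D1"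
  by (cases v) (auto simp: sw_def kl_index_def ac_simps)

lemma Tv_sw: "Tv D2 D1 (sw v) = Qv D1 D2 v" by (cases v) (simp add: sw_def Tv_def Qv_def)
lemma Qv_sw: "Qv D2 D1 (sw v) = Tv D1 D2 v" by (cases v) (simp add: sw_def Tv_def Qv_def)

theorem lemma6:
  fixes D1 D2 a b u t :: int
  assumes "D1 > 0" and "D2 > 0" and "coprime a D1" and "coprime b D2"
  shows "kl_hat a u t b D1 D2 = kl_hat b t u a D2 D1"
proof -
  define I where "I = kl_index D1 D2"
  define H where "H v = (if [fst v = t] (mod D1) \<and> [Qv D1 D2 v = u] (mod D2)
     then ee (of_int (b * fst (snd (snd v))) / of_int D2) * ee (of_int (a * Tv D1 D2 v) / of_int D1) else 0)" for v
  have L: "kl_hat a u t b D1 D2 = (\<Sum>v\<in>I.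
     if [fst (snd (snd v)) = u] (mod D2) \<and> [Tv D1 D2 v = t] (mod D1)
     then ee (of_int (a * fst v) / of_int D1) * ee (of_int (b * Qv D1 D2 v) / of_int D2) else 0)"
    unfolding I_def by (rule hat_reduce[OF assms(1,2)])
  have "kl_hat b t u a D2 D1 = (\<Sum>v\<in>kl_index D2 D1.
     if [fst (snd (snd v)) = t] (mod D1) \<and> [Tv D2 D1 v = u] (mod D2)
     then ee (of_int (b * fst v) / of_int D2) * ee (of_int (a * Qv D2 D1 v) / of_int D1) else 0)"
    by (rule hat_reduce[OF assms(2,1)])
  also have "\<dots> = (\<Sum>v\<in>I. H v)"
  proof (rule sum.reindex_bij_witness[where i = sw and j = sw])
    fix w assume "w \<in> kl_index D2 D1"
    then show "sw w \<in> I" unfolding I_def using sw_mem[of w D2 D1] by simp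
    show "sw (sw w) = w" by (rule sw_sw)
    show "H (sw w) = (if [fst (snd (snd w)) = t] (mod D1) \<and> [Tv D2 D1 w = u] (mod D2)
     then ee (of_int (b * fst w) / of_int D2) * ee (of_int (a * Qv D2 D1 w) / of_int D1) else 0)"
      unfolding H_def Tv_sw Qv_sw by (cases w) (simp add: sw_def)
  next
    fix v assume "v \<in> I"
    then show "sw v \<in> kl_index D2 D1" unfolding I_def by (rule sw_mem)
    show "sw (sw v) = v" by (rule sw_sw)
  qed
  finally have R: "kl_hat b t u a D2 D1 = (\<Sum>v\<in>I. H v)" .
  have "(\<Sum>v\<in>I.
     if [fst (snd (snd v)) = u] (mod D2) \<and> [Tv D1 D2 v = t] (mod D1)
     then ee (of_int (a * fst v) / of_int D1) * ee (of_int (b * Qv D1 D2 v) / of_int D2) else 0) = (\<Sum>v\<in>I. H v)"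
  proof -
  have PH: "phi D1 D2 v \<in> I \<and> phi D1 D2 (phi D1 D2 v) = v" if v: "v \<in> I" for v
  proof -
    obtain p C1 r C2 where vv: "v = (p, C1, r, C2)" by (cases v) auto
    note P = phi_props[OF assms(1,2) v[unfolded I_def vv]]
    show ?thesis using P(1,4) by (simp add: I_def vv)
  qed
  show ?thesis
  proof (rule sum.reindex_bij_witness[where i = "phi D1 D2" and j = "phi D1 D2"])
    fix v assume v: "v \<in> I"
    obtain p C1 r C2 where vv: "v = (p, C1, r, C2)" by (cases v) auto
    note P = phi_props[OF assms(1,2) v[unfolded I_def vv]]
    show "phi D1 D2 v \<in> I" using P(1) by (simp add: I_def vv)
    show "phi D1 D2 (phi D1 D2 v) = v" using P(4) by (simp add: vv)
    have f1: "fst (phi D1 D2 v) = Tv D1 D2 v" by (simp add: phi_def)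
    have f2: "fst (snd (snd (phi D1 D2 v))) = Qv D1 D2 v" by (simp add: phi_def)
    show "H (phi D1 D2 v) = (if [fst (snd (snd v)) = u] (mod D2) \<and> [Tv D1 D2 v = t] (mod D1)
     then ee (of_int (a * fst v) / of_int D1) * ee (of_int (b * Qv D1 D2 v) / of_int D2) else 0)"
      unfolding H_def f1 f2 using P(2,3) by (simp add: vv conj_commute mult.commute)
  qed (use PH in auto)
  qed
  then show ?thesis using L R by simp
qed


end
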